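(* Let $\lambda\in\mathbb{R}$, let $r,n\ge1$ be integers and let $0\le k\le nr$. Then \[ S_\lambda^{(r,r)}(n,k)=\frac{(-1)^k}{k!}\sum_{p=0}^{k}(-1)^p\binom{k}{p}\big((p)_r\big)_{n,\lambda}. \]
   Context: Notation: $(x)_0=1$, $(x)_m=x(x-1)\cdots(x-m+1)$ for $m\ge1$; the generalized (degenerate) falling factorial is $(y)_{0,\lambda}=1$, $(y)_{n,\lambda}=y(y-\lambda)\cdots(y-(n-1)\lambda)$ for $n\ge1$. Let $D=\frac{d}{dx}$ and let $x$ also denote multiplication by $x$. The numbers $S_\lambda^{(r,r)}(n,k)$, $0\le k\le nr$ (generalized degenerate $(r,r)$-Stirling numbers of the second kind) are defined by the operator identity \[ \prod_{j=0}^{n-1}\Big(x^{r}D^{r}-j\lambda\Big)=\sum_{k=0}^{nr}S_\lambda^{(r,r)}(n,k)\,x^{k}D^{k}. \] *)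

theory Defs
  imports "HOL-Computational_Algebra.Polynomial"
begin

definition ffall :: "real \<Rightarrow> nat \<Rightarrow> real" where
  "ffall x m = (\<Prod>i<m. x - real i)"

definition gffall :: "real \<Rightarrow> nat \<Rightarrow> real \<Rightarrow> real" where
  "gffall y n lam = (\<Prod>i<n. y - real i * lam)"

definition xkDk :: "nat \<Rightarrow> real poly \<Rightarrow> real poly" where
  "xkDk k p = monom 1 k * (pderiv ^^ k) p"

text \<open>The operator product prod_{j=0}^{n-1} (x^r D^r - j lambda) (factors commute).\<close>
fun opprod :: "real \<Rightarrow> nat \<Rightarrow> nat \<Rightarrow> real poly \<Rightarrow> real poly" where
  "opprod lam r 0 p = p"
| "opprod lam r (Suc n) p =
     xkDk r (opprod lam r n p) - smult (real n * lam) (opprod lam r n p)"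

definition Srr :: "real \<Rightarrow> nat \<Rightarrow> nat \<Rightarrow> nat \<Rightarrow> real" where
  "Srr lam r n = (THE c. (\<forall>k>n*r. c k = 0) \<and>
      (\<forall>p. opprod lam r n p = (\<Sum>k\<le>n*r. smult (c k) (xkDk k p))))"

end

theory Submission imports Defs begin

lemma ffall_nat: "ffall (real p) j = fact j * real (p choose j)"
  unfolding ffall_def binomial_gbinomial gbinomial_mult_fact lessThan_atLeast0 by simp

lemma ffall_zero: "m < k \<Longrightarrow> ffall (real m) k = 0"
  by (simp add: ffall_nat binomial_eq_0)

lemma ffall_self: "ffall (real m) m = fact m"
  by (simp add: ffall_nat)

lemma alt_choose: "(\<Sum>p=0..k. (-1) ^ p * real (k choose p) * real (p choose j)) =
   (if j = k then (-1) ^ k else 0)"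
proof (cases "j \<le> k")
  case False
  then show ?thesis by (auto intro!: sum.neutral simp: binomial_eq_0)
next
  case True
  have "(\<Sum>p=0..k. (-1) ^ p * real (k choose p) * real (p choose j)) =
        (\<Sum>p=j..k. (-1) ^ p * real (k choose p) * real (p choose j))"
    by (rule sum.mono_neutral_right) (auto simp: binomial_eq_0)
  also have "\<dots> = (\<Sum>p=j..k. (-1) ^ p * real (k choose j) * real ((k-j) choose (p-j)))"
  proof (rule sum.cong)
    fix p assume "p \<in> {j..k}"
    then have "(k choose p) * (p choose j) = (k choose j) * ((k - j) choose (p - j))"
      by (intro choose_mult) auto
    then have "real (k choose p) * real (p choose j) = real (k choose j) * real ((k - j) choose (p - j))"
      by (metis of_nat_mult)
    then show "(-1) ^ p * real (k choose p) * real (p choose j) = (-1) ^ p * real (k choose j) * real ((k-j) choose (p-j))"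
      by (simp add: mult.assoc)
  qed simp
  also have "\<dots> = (\<Sum>i=0..k-j. (-1) ^ (i+j) * real (k choose j) * real ((k-j) choose i))"
    using sum.shift_bounds_cl_nat_ivl[of "\<lambda>p. (-1) ^ p * real (k choose j) * real ((k-j) choose (p-j))" 0 j "k-j"] True
    by simp
  also have "\<dots> = (-1)^j * real (k choose j) * (\<Sum>i\<le>k-j. (-1) ^ i * real ((k-j) choose i))"
    by (simp add: sum_distrib_left atLeast0AtMost power_add mult_ac)
  also have "\<dots> = (if j = k then (-1) ^ k else 0)"
  proof (cases "j = k")
    case True then show ?thesis by simp
  next
    case False
    then have "k - j > 0" using \<open>j \<le> k\<close> by simp
    have "(\<Sum>i\<le>k-j. (-1) ^ i * real ((k-j) choose i)) = 0"
      by (rule choose_alternating_sum[OF \<open>k - j > 0\<close>])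
    with False show ?thesis by simp
  qed
  finally show ?thesis .
qed

lemma alt_ffall: "(\<Sum>p=0..k. (-1) ^ p * real (k choose p) * ffall (real p) j) =
   (if j = k then (-1) ^ k * fact k else 0)"
proof -
  have "(\<Sum>p=0..k. (-1) ^ p * real (k choose p) * ffall (real p) j) =
     fact j * (\<Sum>p=0..k. (-1) ^ p * real (k choose p) * real (p choose j))"
    by (simp add: ffall_nat sum_distrib_left mult_ac)
  also have "\<dots> = (if j = k then (-1) ^ k * fact k else 0)"
    by (simp add: alt_choose)
  finally show ?thesis .
qed

lemma coeff_pderiv_pow: "coeff ((pderiv ^^ k) p) j = ffall (real (j + k)) k * coeff p (j + k)"
proof (induction k arbitrary: j)
  case 0 then show ?case by (simp add: ffall_def)
next
  case (Suc k)
  have "ffall (real (j + Suc k)) (Suc k) = ffall (real (Suc j + k)) k * real (Suc j)"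
    by (simp add: ffall_def)
  then show ?case by (simp add: coeff_pderiv Suc.IH)
qed

lemma coeff_xkDk: "coeff (xkDk k p) m = ffall (real m) k * coeff p m"
  by (auto simp: xkDk_def coeff_monom_mult coeff_pderiv_pow ffall_zero)

lemma coeff_opprod: "coeff (opprod lam r n p) m = gffall (ffall (real m) r) n lam * coeff p m"
  by (induction n) (simp_all add: gffall_def coeff_xkDk algebra_simps)

primrec FFp :: "nat \<Rightarrow> real poly" where
  "FFp 0 = 1"
| "FFp (Suc j) = FFp j * [:- real j, 1:]"

lemma poly_FFp: "poly (FFp j) x = ffall x j"
  by (induction j) (simp_all add: ffall_def algebra_simps)

lemma FFp_deg: "degree (FFp j) = j \<and> coeff (FFp j) j = 1"
proof (induction j)
  case 0 then show ?case by simp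
next
  case (Suc j)
  have nz: "FFp j \<noteq> 0" using Suc by auto
  have "degree (FFp j * [:- real j, 1:]) = degree (FFp j) + degree [:- real j, 1:]"
    by (rule degree_mult_eq) (use nz in auto)
  then have d: "degree (FFp (Suc j)) = Suc j"
    using Suc by simp
  have "coeff (FFp (Suc j)) (Suc j) = lead_coeff (FFp j) * lead_coeff [:- real j, 1:]"
    using d by (metis FFp.simps(2) lead_coeff_mult)
  with Suc d show ?case by simp
qed

lemma ff_expand: "degree Q \<le> d \<Longrightarrow> \<exists>c. \<forall>x. poly Q x = (\<Sum>k\<le>d. c k * ffall x k)"
proof (induction d arbitrary: Q)
  case 0
  then have "Q = [:coeff Q 0:]" by (metis degree_0_id le_zero_eq)
  then have "poly Q x = coeff Q 0" for x
    by (metis (no_types) poly_pCons poly_0 mult_zero_right add_0_right)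
  then show ?case by (intro exI[of _ "\<lambda>_. coeff Q 0"]) (simp add: ffall_def)
next
  case (Suc d)
  define a where "a = coeff Q (Suc d)"
  define Q' where "Q' = Q - smult a (FFp (Suc d))"
  have "degree Q' \<le> d"
  proof (rule degree_le, intro allI impI)
    fix i assume "d < i"
    show "coeff Q' i = 0"
    proof (cases "i = Suc d")
      case True then show ?thesis using FFp_deg[of "Suc d"] by (simp add: Q'_def a_def)
    next
      case False
      then have "i > Suc d" using \<open>d < i\<close> by simp
      have "coeff Q i = 0"
        using Suc.prems \<open>i > Suc d\<close> by (auto intro!: coeff_eq_0)
      moreover have "coeff (FFp (Suc d)) i = 0"
        using FFp_deg[of "Suc d"] \<open>i > Suc d\<close> coeff_eq_0 by metis
      ultimately show ?thesis by (simp add: Q'_def del: FFp.simps)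
    qed
  qed
  from Suc.IH[OF this] obtain c where c: "\<And>x. poly Q' x = (\<Sum>k\<le>d. c k * ffall x k)" by blast
  show ?case
  proof (intro exI allI)
    fix x
    have "poly Q x = poly Q' x + a * ffall x (Suc d)"
      by (simp add: Q'_def poly_FFp[symmetric] del: FFp.simps)
    also have "\<dots> = (\<Sum>k\<le>Suc d. (c(Suc d := a)) k * ffall x k)"
      by (simp add: c)
    finally show "poly Q x = (\<Sum>k\<le>Suc d. (c(Suc d := a)) k * ffall x k)" .
  qed
qed

lemma gffall_poly: "\<exists>c. \<forall>x. gffall (ffall x r) n lam = (\<Sum>k\<le>n*r. c k * ffall x k)"
proof -
  define Q where "Q = (\<Prod>i<n. FFp r - [:real i * lam:])"
  have "poly Q x = gffall (ffall x r) n lam" for x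
    by (simp add: Q_def poly_prod poly_FFp gffall_def)
  moreover have "degree Q \<le> n * r"
  proof -
    have "degree Q \<le> (\<Sum>i<n. degree (FFp r - [:real i * lam:]))"
      unfolding Q_def using degree_prod_sum_le[of "{..<n}" "\<lambda>i. FFp r - [:real i * lam:]"]
      by (simp add: o_def)
    also have "\<dots> \<le> (\<Sum>i<n. r)"
      by (intro sum_mono degree_diff_le) (auto simp: FFp_deg)
    finally show ?thesis by simp
  qed
  ultimately show ?thesis using ff_expand by metis
qed

lemma coeff_opsum: "coeff (\<Sum>k\<le>N. smult (d k) (xkDk k p)) m = (\<Sum>k\<le>N. d k * ffall (real m) k) * coeff p m"
  by (simp add: coeff_sum coeff_xkDk sum_distrib_right mult.assoc)

theorem theorem5:
  fixes lam :: real and r n k :: nat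
  assumes "r \<ge> 1" and "n \<ge> 1" and "k \<le> n * r"
  shows "Srr lam r n k =
    (-1) ^ k / fact k *
      (\<Sum>p=0..k. (-1) ^ p * real (k choose p) * gffall (ffall (real p) r) n lam)"
proof -
  define N where "N = n * r"
  obtain c0 where c0: "\<And>x. gffall (ffall x r) n lam = (\<Sum>k\<le>N. c0 k * ffall x k)"
    using gffall_poly unfolding N_def by blast
  define c where "c k = (if k \<le> N then c0 k else 0)" for k
  have c_eq: "gffall (ffall x r) n lam = (\<Sum>k\<le>N. c k * ffall x k)" for x
    unfolding c0 by (rule sum.cong) (auto simp: c_def)
  define P where "P d = ((\<forall>k>n*r. d k = 0) \<and>
      (\<forall>p. opprod lam r n p = (\<Sum>k\<le>n*r. smult (d k) (xkDk k p))))" for d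
  have Pc: "P c"
    unfolding P_def
  proof (intro conjI allI impI)
    fix k assume "k > n * r" then show "c k = 0" by (simp add: c_def N_def)
  next
    fix p show "opprod lam r n p = (\<Sum>k\<le>n*r. smult (c k) (xkDk k p))"
      by (rule poly_eqI) (simp add: coeff_opsum coeff_opprod c_eq N_def)
  qed
  have uniq: "d = c" if "P d" for d
  proof -
    have eqm: "(\<Sum>k\<le>N. (d k - c k) * ffall (real m) k) = 0" for m
    proof -
      have "coeff (opprod lam r n (monom 1 m)) m = coeff (\<Sum>k\<le>n*r. smult (d k) (xkDk k (monom 1 m))) m"
        using that unfolding P_def by metis
      then have "gffall (ffall (real m) r) n lam = (\<Sum>k\<le>N. d k * ffall (real m) k)"
        by (simp add: coeff_opsum coeff_opprod N_def)
      then show ?thesis by (simp add: c_eq left_diff_distrib sum_subtractf)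
    qed
    have "d j = c j" for j
    proof (induction j rule: less_induct)
      case (less j)
      show ?case
      proof (cases "j \<le> N")
        case False
        then show ?thesis using that by (simp add: P_def c_def N_def)
      next
        case True
        have "0 = (\<Sum>k\<le>N. (d k - c k) * ffall (real j) k)" using eqm by simp
        also have "\<dots> = (\<Sum>k\<le>N. (if k = j then (d j - c j) * fact j else 0))"
        proof (rule sum.cong)
          fix k assume "k \<in> {..N}"
          show "(d k - c k) * ffall (real j) k = (if k = j then (d j - c j) * fact j else 0)"
            using less.IH[of k] ffall_zero[of j k] ffall_self[of j]
            by (cases k j rule: linorder_cases) auto
        qed simp
        also have "\<dots> = (d j - c j) * fact j" using True by simp
        finally show ?thesis by simp
      qed
    qed
    then show ?thesis by blast
  qed
  have S: "Srr lam r n = c"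
    unfolding Srr_def using Pc uniq unfolding P_def by (rule the_equality)
  have "(\<Sum>p=0..k. (-1) ^ p * real (k choose p) * gffall (ffall (real p) r) n lam)
     = (\<Sum>p=0..k. \<Sum>j\<le>N. c j * ((-1) ^ p * real (k choose p) * ffall (real p) j))"
    by (simp add: c_eq sum_distrib_left mult_ac)
  also have "\<dots> = (\<Sum>j\<le>N. c j * (\<Sum>p=0..k. (-1) ^ p * real (k choose p) * ffall (real p) j))"
    by (subst sum.swap) (simp add: sum_distrib_left)
  also have "\<dots> = (\<Sum>j\<le>N. (if j = k then c k * ((-1) ^ k * fact k) else 0))"
    by (rule sum.cong) (simp_all add: alt_ffall)
  also have "\<dots> = c k * ((-1) ^ k * fact k)"
    using assms(3) by (simp add: N_def)
  finally show ?thesis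
    by (simp add: S)
qed

end
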